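(* Let $C$ be a nonempty closed convex subset of a real Banach space $X$ and let $a\in X$. Then $a$ is a weak internal point of $C$ if and only if $a\in C$ and $C$ is quasi-symmetric with respect to $a$.
   Context: The origin is a weak internal point of a closed convex set $A$ if for every $x\in A$ there exists $\delta=\delta(x)>0$ with $-\delta x\in A$; a point $a$ is a weak internal point of $C$ if the origin is a weak internal point of $C-a$. A closed convex set $A$ containing $0$ is quasi-symmetric if for every $r>0$ there exists $\theta=\theta(r)\in(0,1]$ such that $x\in A$, $\|x\|\le r$ implies $-\theta x\in A$; $C$ is quasi-symmetric with respect to $a\in C$ if $C-a$ is quasi-symmetric. *)

theory Defs
  imports "HOL-Analysis.Analysis"
begin

definition origin_weak_internal :: "'a::real_normed_vector set \<Rightarrow> bool" where
  "origin_weak_internal A \<longleftrightarrow> (\<forall>x\<in>A. \<exists>\<delta>>0. - (\<delta> *\<^sub>R x) \<in> A)"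

definition weak_internal_point :: "'a::real_normed_vector \<Rightarrow> 'a set \<Rightarrow> bool" where
  "weak_internal_point a C \<longleftrightarrow> origin_weak_internal ((\<lambda>x. x - a) ` C)"

definition quasi_symmetric :: "'a::real_normed_vector set \<Rightarrow> bool" where
  "quasi_symmetric A \<longleftrightarrow> closed A \<and> convex A \<and> 0 \<in> A \<and>
     (\<forall>r>0. \<exists>\<theta>. 0 < \<theta> \<and> \<theta> \<le> 1 \<and>
        (\<forall>x\<in>A. norm x \<le> r \<longrightarrow> - (\<theta> *\<^sub>R x) \<in> A))"

definition quasi_symmetric_wrt :: "'a::real_normed_vector set \<Rightarrow> 'a \<Rightarrow> bool" where
  "quasi_symmetric_wrt C a \<longleftrightarrow> a \<in> C \<and> quasi_symmetric ((\<lambda>x. x - a) ` C)"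

end

theory Submission
  imports Defs
begin

lemma owi_zero:
  assumes "convex A" "A \<noteq> {}" "origin_weak_internal A"
  shows "0 \<in> A"
proof -
  obtain x where x: "x \<in> A" using assms(2) by auto
  then obtain d where d: "d > 0" "- (d *\<^sub>R x) \<in> A"
    using assms(3) unfolding origin_weak_internal_def by auto
  have "(d/(1+d)) *\<^sub>R x + (1/(1+d)) *\<^sub>R (- (d *\<^sub>R x)) \<in> A"
    using convexD[OF assms(1) x d(2), of "d/(1+d)" "1/(1+d)"] d(1)
    by (simp add: add_divide_distrib[symmetric])
  moreover have "(d/(1+d)) *\<^sub>R x + (1/(1+d)) *\<^sub>R (- (d *\<^sub>R x)) = 0"
    by (simp add: scaleR_add_left[symmetric])
  ultimately show ?thesis by simp
qed

lemma key_step: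
  fixes A :: "'a::real_normed_vector set"
  assumes cvx: "convex A" and x0: "x0 \<in> A" and e: "e > 0" and c: "c > 0" "c \<le> 1"
    and ball: "\<And>y. y \<in> A \<Longrightarrow> dist y x0 < e \<Longrightarrow> - (c *\<^sub>R y) \<in> A"
    and r: "r > 0"
  shows "\<exists>\<theta>. 0 < \<theta> \<and> \<theta> \<le> 1 \<and> (\<forall>x\<in>A. norm x \<le> r \<longrightarrow> - (\<theta> *\<^sub>R x) \<in> A)"
proof -
  define t where "t = min (1/2) (e / (2 * (r + norm x0 + 1)))"
  have t0: "t > 0" using e r by (simp add: t_def add_pos_nonneg)
  have t1: "t \<le> 1/2" unfolding t_def by (rule min.cobounded1)
  have te: "t * (r + norm x0) < e"
  proof -
    have "t * (r + norm x0) \<le> (e / (2 * (r + norm x0 + 1))) * (r + norm x0)"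
      by (rule mult_right_mono) (use r in \<open>auto simp: t_def\<close>)
    also have "\<dots> < e"
    proof -
      have p: "r + norm x0 + 1 > 0" using r by (simp add: add_pos_nonneg)
      have "(e / (2 * (r + norm x0 + 1))) * (r + norm x0) = e * ((r + norm x0) / (2 * (r + norm x0 + 1)))"
        by simp
      also have "\<dots> < e * 1"
        using p e by (intro mult_strict_left_mono) (auto simp: divide_simps)
      finally show ?thesis by simp
    qed
    finally show ?thesis .
  qed
  define l where "l = 1 / (1 + c * (1 - t))"
  have cpos: "c * (1 - t) \<ge> 0" using c t1 by simp
  have l0: "l > 0" "l \<le> 1" using cpos by (auto simp: l_def divide_simps)
  define th where "th = l * c * t"
  have th: "th > 0" "th \<le> 1"
  proof -
    show "th > 0" using l0 c t0 by (simp add: th_def)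
    have ct: "c * t \<le> 1 * 1" using c t1 t0 by (intro mult_mono) auto
    have "l * (c * t) \<le> 1 * 1" using l0 ct c t0 by (intro mult_mono) auto
    then show "th \<le> 1" by (simp add: th_def mult.assoc)
  qed
  have "\<forall>x\<in>A. norm x \<le> r \<longrightarrow> - (th *\<^sub>R x) \<in> A"
  proof (intro ballI impI)
    fix x assume xA: "x \<in> A" and nx: "norm x \<le> r"
    define y where "y = (1 - t) *\<^sub>R x0 + t *\<^sub>R x"
    have yA: "y \<in> A" unfolding y_def using convexD[OF cvx x0 xA, of "1-t" t] t0 t1 by simp
    have "dist y x0 = norm (t *\<^sub>R (x - x0))"
      by (simp add: y_def dist_norm algebra_simps)
    also have "\<dots> = t * norm (x - x0)" using t0 by simp
    also have "\<dots> \<le> t * (r + norm x0)"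
      using t0 nx norm_triangle_ineq4[of x x0] by (intro mult_left_mono) auto
    finally have "dist y x0 < e" using te by linarith
    then have my: "- (c *\<^sub>R y) \<in> A" using ball yA by blast
    have "l *\<^sub>R (- (c *\<^sub>R y)) + (1 - l) *\<^sub>R x0 \<in> A"
      using convexD[OF cvx my x0, of l "1-l"] l0 by simp
    moreover have "l *\<^sub>R (- (c *\<^sub>R y)) + (1 - l) *\<^sub>R x0 = - (th *\<^sub>R x)"
    proof -
      have eq: "1 - l - l * c * (1 - t) = 0"
        using cpos by (simp add: l_def field_simps)
      have "l *\<^sub>R (- (c *\<^sub>R y)) + (1 - l) *\<^sub>R x0
          = (1 - l - l * c * (1 - t)) *\<^sub>R x0 - (l * c * t) *\<^sub>R x"
        by (simp add: y_def algebra_simps)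
      then show ?thesis using eq by (simp add: th_def)
    qed
    ultimately show "- (th *\<^sub>R x) \<in> A" by simp
  qed
  then show ?thesis using th by blast
qed

lemma owi_qs:
  fixes A :: "'a::banach set"
  assumes cl: "closed A" and cvx: "convex A" and ne: "A \<noteq> {}" and w: "origin_weak_internal A"
  shows "quasi_symmetric A"
proof -
  have z: "0 \<in> A" using owi_zero[OF cvx ne w] .
  define F where "F n = A \<inter> (\<lambda>x. - ((1 / real (Suc n)) *\<^sub>R x)) -` A" for n
  have cov: "\<Union>(range F) = A"
  proof
    show "\<Union>(range F) \<subseteq> A" by (auto simp: F_def)
    show "A \<subseteq> \<Union>(range F)"
    proof
      fix x assume xA: "x \<in> A"
      then obtain d where d: "d > 0" "- (d *\<^sub>R x) \<in> A"
        using w unfolding origin_weak_internal_def by auto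
      obtain n where n: "inverse (real (Suc n)) < d" using reals_Archimedean[OF d(1)] by auto
      define u where "u = (1 / real (Suc n)) / d"
      have u: "0 \<le> u" "u \<le> 1" using n d by (auto simp: u_def divide_simps mult.commute)
      have "u *\<^sub>R (- (d *\<^sub>R x)) + (1 - u) *\<^sub>R 0 \<in> A"
        using convexD[OF cvx d(2) z, of u "1-u"] u by simp
      moreover have "u *\<^sub>R (- (d *\<^sub>R x)) + (1 - u) *\<^sub>R 0 = - ((1 / real (Suc n)) *\<^sub>R x)"
        using d(1) by (simp add: u_def)
      ultimately have "- ((1 / real (Suc n)) *\<^sub>R x) \<in> A" by metis
      then have "x \<in> F n" using xA by (simp add: F_def)
      then show "x \<in> \<Union>(range F)" by blast
    qed
  qed
  have clF: "closedin (top_of_set A) (F n)" for n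
    unfolding F_def
    by (rule closedin_closed_Int, rule closed_vimage[OF cl], intro continuous_intros)
  have cms: "completely_metrizable_space (top_of_set A)"
  proof -
    have "closedin euclidean A" using cl closed_closedin by blast
    then show ?thesis by (rule completely_metrizable_space_closedin[OF completely_metrizable_space_euclidean])
  qed
  have "\<exists>n. (top_of_set A) interior_of (F n) \<noteq> {}"
  proof (rule ccontr)
    assume nn: "\<not> (\<exists>n. (top_of_set A) interior_of (F n) \<noteq> {})"
    have "(top_of_set A) interior_of \<Union>(range F) = {}"
    proof (rule Baire_category_alt)
      show "completely_metrizable_space (top_of_set A) \<or> locally_compact_space (top_of_set A) \<and> regular_space (top_of_set A)"
        using cms by blast
      show "countable (range F)" by simp
      fix T assume "T \<in> range F"
      then obtain m where "T = F m" by blast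
      then show "closedin (top_of_set A) T \<and> (top_of_set A) interior_of T = {}"
        using clF nn by blast
    qed
    then show False using cov ne interior_of_topspace[of "top_of_set A"] by simp
  qed
  then obtain n x0 where x0: "x0 \<in> (top_of_set A) interior_of (F n)" by blast
  have op: "openin (top_of_set A) ((top_of_set A) interior_of (F n))" by (rule openin_interior_of)
  then have x0A: "x0 \<in> A" using x0 by (meson openin_imp_subset subsetD)
  obtain e where e: "e > 0" "ball x0 e \<inter> A \<subseteq> (top_of_set A) interior_of (F n)"
    using op x0 unfolding openin_contains_ball by blast
  have ballF: "- ((1 / real (Suc n)) *\<^sub>R y) \<in> A" if "y \<in> A" "dist y x0 < e" for y
  proof -
    have "y \<in> ball x0 e \<inter> A" using that by (simp add: dist_commute)
    then have "y \<in> F n" using e(2) interior_of_subset[of "top_of_set A" "F n"] by blast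
    then show ?thesis by (simp add: F_def)
  qed
  show ?thesis unfolding quasi_symmetric_def
  proof (intro conjI cl cvx z allI impI)
    fix r :: real assume r0: "r > 0"
    have c0: "0 < 1 / real (Suc n)" "1 / real (Suc n) \<le> 1" by auto
    show "\<exists>\<theta>. 0 < \<theta> \<and> \<theta> \<le> 1 \<and> (\<forall>x\<in>A. norm x \<le> r \<longrightarrow> - (\<theta> *\<^sub>R x) \<in> A)"
      using key_step[OF cvx x0A e(1) c0 ballF r0] by blast
  qed
qed

lemma qs_owi:
  assumes "quasi_symmetric A"
  shows "origin_weak_internal A"
  unfolding origin_weak_internal_def
proof
  fix x assume xA: "x \<in> A"
  have "norm x + 1 > 0" by (simp add: add_nonneg_pos)
  then obtain th where "0 < th" "th \<le> 1" "\<forall>y\<in>A. norm y \<le> norm x + 1 \<longrightarrow> - (th *\<^sub>R y) \<in> A"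
    using assms unfolding quasi_symmetric_def by blast
  then show "\<exists>\<delta>>0. - (\<delta> *\<^sub>R x) \<in> A" using xA by auto
qed

theorem mainTheorem5:
  fixes C :: "'a::banach set" and a :: 'a
  assumes "C \<noteq> {}" and "closed C" and "convex C"
  shows "weak_internal_point a C \<longleftrightarrow> a \<in> C \<and> quasi_symmetric_wrt C a"
proof -
  have eq: "(\<lambda>x. x - a) ` C = (+) (- a) ` C" by (auto simp: algebra_simps)
  have cl: "closed ((\<lambda>x. x - a) ` C)" unfolding eq using assms(2) by (rule closed_translation)
  have cv: "convex ((\<lambda>x. x - a) ` C)" unfolding eq using assms(3) by (rule convex_translation)
  have ne: "(\<lambda>x. x - a) ` C \<noteq> {}" using assms(1) by simp
  show ?thesis
  proof
    assume w: "weak_internal_point a C"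
    then have o: "origin_weak_internal ((\<lambda>x. x - a) ` C)" by (simp add: weak_internal_point_def)
    have "0 \<in> (\<lambda>x. x - a) ` C" using owi_zero[OF cv ne o] .
    then have aC: "a \<in> C" by auto
    show "a \<in> C \<and> quasi_symmetric_wrt C a"
      using aC owi_qs[OF cl cv ne o] by (simp add: quasi_symmetric_wrt_def)
  next
    assume "a \<in> C \<and> quasi_symmetric_wrt C a"
    then show "weak_internal_point a C"
      by (simp add: quasi_symmetric_wrt_def weak_internal_point_def qs_owi)
  qed
qed

end
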